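(* Under the standing setup, let $c>0$ be a constant such that $|\mathcal{F}(\mu)(4\pi\overline{\theta^{N}})|>c$ for all $N\in\mathbb{N}$. For $n\ge1$ let \[ U_{n}=\Big\{z\in S\::\:\sup_{r\ge n}|\mathcal{F}(P_{z}\mu)(r)|>c\Big\}. \] Then for every $n\ge1$, $U_n$ is an open and dense subset of $S$.
   Context: Standing setup: Identify $\mathbb{R}^2$ with $\mathbb{C}$. Let $\theta\in\mathbb{C}$ be a complex Pisot number (an algebraic integer with $\theta\notin\mathbb{R}$, $|\theta|>1$, and all Galois conjugates of $\theta$ other than $\overline{\theta}$ of modulus $<1$) such that $\arg\theta\notin\pi\mathbb{Q}$, $3<|\theta|<4$, and the minimal polynomial of $\theta$ over $\mathbb{Q}$ has constant term $1$ or $-1$. Set $\lambda=\theta^{-1}$ and $\mathcal{Y}=\{k\lambda^{l}:k,l\in\mathbb{N}\}$. Let $a_1,a_2\in\mathcal{Y}$ be such that the IFS $\Phi=\{\varphi_{k,j}(z)=\lambda z+(-1)^k a_j : k,j\in\{1,2\}\}$ satisfies the strong separation condition (the images of its attractor under the four maps are pairwise disjoint). Let $\mu$ be the unique compactly supported Borel probability measure on $\mathbb{C}$ with $\mu=\frac14\sum_{k,j\in\{1,2\}}\varphi_{k,j}\mu$ (pushforwards). Write $S=\{z\in\mathbb{C}:|z|=1\}$, $\langle z,w\rangle=\mathrm{Re}(z\overline{w})$, and $P_zw=\langle w,z\rangle$ for $z\in S$, $w\in\mathbb{C}$. For a measure $\nu$ on $\mathbb{C}$, $\mathcal{F}(\nu)(\xi)=\int\exp(i\,\mathrm{Re}(z\overline{\xi}))\,d\nu(z)$;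 for a compactly supported probability measure $\nu$ on $\mathbb{R}$, $\mathcal{F}(\nu)(r)=\int e^{ixr}\,d\nu(x)$. *)

theory Defs
  imports "HOL-Probability.Probability" "HOL-Computational_Algebra.Polynomial" "HOL-Computational_Algebra.Factorial_Ring"
begin

text \<open>The minimal polynomial
  of an algebraic integer over Q is the unique monic polynomial in Z[x] that is irreducible
  and vanishes at theta; its complex roots are the Galois conjugates.\<close>
definition min_poly_of :: "complex \<Rightarrow> int poly \<Rightarrow> bool" where
  "min_poly_of \<theta> p \<longleftrightarrow> lead_coeff p = 1 \<and> irreducible p \<and> poly (map_poly of_int p) \<theta> = 0"

definition complex_pisot :: "complex \<Rightarrow> bool" where
  "complex_pisot \<theta> \<longleftrightarrow> \<theta> \<notin> \<real> \<and> norm \<theta> > 1 \<and>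
     (\<exists>p. min_poly_of \<theta> p \<and>
        (\<forall>w. poly (map_poly of_int p) w = 0 \<longrightarrow> w \<noteq> \<theta> \<longrightarrow> w \<noteq> cnj \<theta> \<longrightarrow> norm w < 1))"

definition standing_theta :: "complex \<Rightarrow> bool" where
  "standing_theta \<theta> \<longleftrightarrow> complex_pisot \<theta> \<and> Arg \<theta> / pi \<notin> \<rat> \<and> 3 < norm \<theta> \<and> norm \<theta> < 4 \<and>
     (\<exists>p. min_poly_of \<theta> p \<and> (coeff p 0 = 1 \<or> coeff p 0 = -1))"

definition Yset :: "complex \<Rightarrow> complex set" where
  "Yset lam = {of_nat k * lam ^ l | k l. k \<ge> 1 \<and> l \<ge> 1}"

definition ifs_map :: "complex \<Rightarrow> complex \<Rightarrow> complex \<Rightarrow> nat \<Rightarrow> nat \<Rightarrow> complex \<Rightarrow> complex" where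
  "ifs_map lam a1 a2 k j z = lam * z + (-1) ^ k * (if j = 1 then a1 else a2)"

definition ifs_index :: "(nat \<times> nat) set" where
  "ifs_index = {1,2} \<times> {1,2}"

definition is_attractor :: "complex \<Rightarrow> complex \<Rightarrow> complex \<Rightarrow> complex set \<Rightarrow> bool" where
  "is_attractor lam a1 a2 K \<longleftrightarrow> K \<noteq> {} \<and> compact K \<and>
     K = (\<Union>(k,j)\<in>ifs_index. ifs_map lam a1 a2 k j ` K)"

definition strong_separation :: "complex \<Rightarrow> complex \<Rightarrow> complex \<Rightarrow> bool" where
  "strong_separation lam a1 a2 \<longleftrightarrow> (\<exists>K. is_attractor lam a1 a2 K \<and>
     (\<forall>i\<in>ifs_index. \<forall>i'\<in>ifs_index. i \<noteq> i' \<longrightarrow>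
        ifs_map lam a1 a2 (fst i) (snd i) ` K \<inter> ifs_map lam a1 a2 (fst i') (snd i') ` K = {}))"

definition self_similar_measure :: "complex \<Rightarrow> complex \<Rightarrow> complex \<Rightarrow> complex measure \<Rightarrow> bool" where
  "self_similar_measure lam a1 a2 \<mu> \<longleftrightarrow> prob_space \<mu> \<and> sets \<mu> = sets borel \<and>
     (\<exists>C. compact C \<and> emeasure \<mu> (space \<mu> - C) = 0) \<and>
     (\<forall>A\<in>sets borel. measure \<mu> A =
        (1/4) * (\<Sum>(k,j)\<in>ifs_index. measure \<mu> (ifs_map lam a1 a2 k j -` A)))"

definition fourier_C :: "complex measure \<Rightarrow> complex \<Rightarrow> complex" where
  "fourier_C \<nu> \<xi> = (LINT z|\<nu>. exp (\<i> * complex_of_real (Re (z * cnj \<xi>))))"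

definition fourier_R :: "real measure \<Rightarrow> real \<Rightarrow> complex" where
  "fourier_R \<nu> r = (LINT x|\<nu>. exp (\<i> * complex_of_real (x * r)))"

definition proj :: "complex \<Rightarrow> complex \<Rightarrow> real" where
  "proj z w = Re (w * cnj z)"

definition proj_measure :: "complex \<Rightarrow> complex measure \<Rightarrow> real measure" where
  "proj_measure z \<mu> = distr \<mu> borel (proj z)"

definition unit_circle :: "complex set" where
  "unit_circle = {z. norm z = 1}"

definition U_set :: "complex measure \<Rightarrow> real \<Rightarrow> nat \<Rightarrow> complex set" where
  "U_set \<mu> c n = {z \<in> unit_circle. (SUP r\<in>{real n..}. norm (fourier_R (proj_measure z \<mu>) r)) > c}"

end

theory Submission
  imports Defs "HOL-Analysis.Kronecker_Approximation_Theorem"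
begin

lemma fC_cont:
  assumes "prob_space M" "sets M = sets borel"
  shows "isCont (fourier_C M) \<xi>"
  unfolding continuous_at_sequentially
proof safe
  interpret prob_space M by fact
  fix X assume X: "X \<longlonglongrightarrow> \<xi>"
  have meas: "(\<lambda>z::complex. exp (\<i> * complex_of_real (Re (z * cnj y)))) \<in> borel_measurable M" for y
    using assms(2) measurable_cong_sets by (auto intro!: borel_measurable_continuous_onI continuous_intros)
  show "(fourier_C M \<circ> X) \<longlonglongrightarrow> fourier_C M \<xi>"
    unfolding comp_def fourier_C_def
    apply (rule integral_dominated_convergence[where w="\<lambda>_. 1"])
    apply (rule meas)
    apply (rule meas)
    by (auto intro!: tendsto_intros X simp: norm_exp_i_times)
qed

lemma fC_le1:
  assumes "prob_space M"
  shows "norm (fourier_C M \<xi>) \<le> 1"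
proof -
  interpret prob_space M by fact
  have "norm (fourier_C M \<xi>) \<le> (\<integral>x. norm (exp (\<i> * complex_of_real (Re (x * cnj \<xi>)))) \<partial>M)"
    unfolding fourier_C_def by (intro integral_norm_bound)
  also have "\<dots> \<le> 1" by (simp add: norm_exp_i_times)
  finally show ?thesis .
qed

lemma fR_eq:
  assumes "sets M = sets borel"
  shows "fourier_R (proj_measure z M) r = fourier_C M (of_real r * z)"
proof -
  have pm: "proj z \<in> measurable M borel"
    unfolding proj_def using assms measurable_cong_sets by (auto intro!: borel_measurable_continuous_onI continuous_intros)
  have "fourier_R (proj_measure z M) r = (LINT w|M. exp (\<i> * complex_of_real (proj z w * r)))"
    unfolding fourier_R_def proj_measure_def
    by (rule integral_distr[OF pm]) (auto intro!: borel_measurable_continuous_onI continuous_intros)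
  also have "\<dots> = fourier_C M (of_real r * z)"
    unfolding fourier_C_def proj_def by (simp add: algebra_simps)
  finally show ?thesis .
qed

lemma exp_dist: "cmod (exp (\<i> * of_real x) - exp (\<i> * of_real y)) \<le> \<bar>x - y\<bar>"
proof -
  have "exp (\<i> * of_real x) - exp (\<i> * of_real y) = exp (\<i> * of_real y) * (exp (\<i> * of_real (x - y)) - 1)"
    by (simp add: algebra_simps flip: exp_add)
  hence "cmod (exp (\<i> * of_real x) - exp (\<i> * of_real y)) = cmod (exp (\<i> * of_real (x - y)) - 1)"
    by (simp add: norm_mult norm_exp_i_times)
  also have "\<dots> \<le> \<bar>x - y\<bar>" using iexp_approx1[of "x - y" 0] by simp
  finally show ?thesis .
qed

theorem lemma3p3:
  fixes \<theta> lam a1 a2 :: complex and \<mu> :: "complex measure" and c :: real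
  assumes "standing_theta \<theta>"
    and "lam = inverse \<theta>"
    and "a1 \<in> Yset lam" and "a2 \<in> Yset lam"
    and "strong_separation lam a1 a2"
    and "self_similar_measure lam a1 a2 \<mu>"
    and "c > 0"
    and "\<forall>N::nat. N \<ge> 1 \<longrightarrow> norm (fourier_C \<mu> (4 * pi * cnj (\<theta> ^ N))) > c"
  shows "\<forall>n::nat. n \<ge> 1 \<longrightarrow>
           openin (top_of_set unit_circle) (U_set \<mu> c n) \<and> unit_circle \<subseteq> closure (U_set \<mu> c n)"
proof (intro allI impI conjI)
  fix n :: nat assume n1: "n \<ge> 1"
  have P: "prob_space \<mu>" and B: "sets \<mu> = sets borel"
    using assms(6) unfolding self_similar_measure_def by auto
  have th3: "3 < norm \<theta>" and irr: "Arg \<theta> / pi \<notin> \<rat>"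
    using assms(1) unfolding standing_theta_def by auto
  define F where "F z r = norm (fourier_C \<mu> (of_real r * z))" for z r
  have Ueq: "U_set \<mu> c n = {z \<in> unit_circle. \<exists>r\<in>{real n..}. c < F z r}"
  proof -
    have "(c < (SUP r\<in>{real n..}. norm (fourier_R (proj_measure z \<mu>) r))) = (\<exists>r\<in>{real n..}. c < F z r)" for z
    proof -
      have "(SUP r\<in>{real n..}. norm (fourier_R (proj_measure z \<mu>) r)) = (SUP r\<in>{real n..}. F z r)"
        unfolding F_def fR_eq[OF B] ..
      moreover have "bdd_above ((F z) ` {real n..})"
        unfolding F_def using fC_le1[OF P] by (intro bdd_aboveI[where M=1]) auto
      ultimately show ?thesis by (simp add: less_cSUP_iff)
    qed
    thus ?thesis unfolding U_set_def by auto
  qed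
  have Fcont: "continuous_on UNIV (\<lambda>z. F z r)" for r
  proof -
    have "isCont (\<lambda>z. F z r) z" for z
    proof -
      have "isCont (\<lambda>z. fourier_C \<mu> (of_real r * z)) z"
        by (rule isCont_o2[where f="\<lambda>z. of_real r * z", OF _ fC_cont[OF P B]]) (intro continuous_intros)
      thus ?thesis unfolding F_def by (intro continuous_intros)
    qed
    thus ?thesis by (intro continuous_at_imp_continuous_on) auto
  qed
  have "U_set \<mu> c n = unit_circle \<inter> (\<Union>r\<in>{real n..}. {z. c < F z r})"
    unfolding Ueq by auto
  moreover have "open (\<Union>r\<in>{real n..}. {z. c < F z r})"
    by (intro open_UN ballI open_Collect_less continuous_on_const Fcont)
  ultimately show "openin (top_of_set unit_circle) (U_set \<mu> c n)"
    by (simp add: openin_open_Int)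
  show "unit_circle \<subseteq> closure (U_set \<mu> c n)"
  proof
    fix z assume zS: "z \<in> unit_circle"
    hence nz: "norm z = 1" unfolding unit_circle_def by auto
    show "z \<in> closure (U_set \<mu> c n)"
      unfolding closure_approachable
    proof (intro allI impI)
      fix e :: real assume e: "e > 0"
      define t where "t = Arg \<theta> / (2 * pi)"
      have tirr: "t \<notin> \<rat>"
      proof
        assume "t \<in> \<rat>"
        hence "2 * t \<in> \<rat>" by simp
        thus False using irr unfolding t_def by simp
      qed
      define \<phi> where "\<phi> = Arg z"
      have zc: "z = cis \<phi>"
        using cis_Arg[of z] nz unfolding \<phi>_def by (cases "z = 0") (auto simp: sgn_div_norm)
      obtain h k where k0: "k > 0" and hk: "\<bar>of_int k * t - of_int h - (- \<phi> / (2 * pi) - real n * t)\<bar> < e / (2 * pi)"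
      proof -
        have ep: "e / (2*pi) > 0" using e by simp
        show ?thesis
          using sequence_of_fractional_parts_is_dense[OF tirr ep, of "- \<phi> / (2 * pi) - real n * t"] that
          by blast
      qed
      define N where "N = nat k + n"
      have RN: "real N = of_int k + real n" unfolding N_def using k0 by simp
      define a where "a = real N * Arg \<theta> - 2 * pi * of_int h"
      define X where "X = of_int k * t - of_int h - (- \<phi> / (2 * pi) - real n * t)"
      have eq: "(-a) - \<phi> = - (2 * pi) * X"
        unfolding a_def RN t_def X_def by (simp add: field_simps)
      have "\<bar>(-a) - \<phi>\<bar> = 2 * pi * \<bar>X\<bar>" unfolding eq abs_mult by simp
      also have "\<dots> < 2 * pi * (e / (2 * pi))"
        using hk unfolding X_def by (intro mult_strict_left_mono) auto
      also have "\<dots> = e" by simp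
      finally have ad: "\<bar>(-a) - \<phi>\<bar> < e" .
      have th0: "\<theta> \<noteq> 0" using th3 by auto
      have thc: "\<theta> = of_real (norm \<theta>) * cis (Arg \<theta>)"
        using cis_Arg[OF th0] th0 by (simp add: sgn_div_norm scaleR_conv_of_real field_simps)
      have "cnj (\<theta> ^ N) = of_real (norm \<theta> ^ N) * cis (- (real N * Arg \<theta>))"
      proof -
        have "cnj (\<theta> ^ N) = (cnj \<theta>) ^ N" by simp
        also have "cnj \<theta> = of_real (norm \<theta>) * cis (- Arg \<theta>)"
          by (subst thc) (simp add: cis_cnj)
        moreover have "cis (- Arg \<theta>) ^ N = cis (- (real N * Arg \<theta>))" by (simp add: Complex.DeMoivre)
        ultimately show ?thesis by (simp add: power_mult_distrib)
      qed
      moreover have "cis (- (real N * Arg \<theta>)) = cis (-a)"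
      proof -
        have "cis (-a) = cis (- (real N * Arg \<theta>)) * cis (2 * pi * of_int h)"
          unfolding a_def cis_mult by simp
        thus ?thesis by simp
      qed
      ultimately have cN: "cnj (\<theta> ^ N) = of_real (norm \<theta> ^ N) * cis (-a)" by simp
      define w where "w = cis (-a)"
      define r where "r = 4 * pi * norm \<theta> ^ N"
      have wS: "w \<in> unit_circle" unfolding w_def unit_circle_def by simp
      have N1: "N \<ge> 1" unfolding N_def using k0 by simp
      have "real n \<le> real N" unfolding N_def by simp
      also have "\<dots> \<le> 2 ^ N" using of_nat_less_two_power[of N, where ?'a=real] by linarith
      also have "\<dots> \<le> norm \<theta> ^ N" by (rule power_mono) (use th3 in auto)
      also have "\<dots> \<le> r" unfolding r_def using pi_gt3 th3 by (simp add: mult_le_cancel_right1)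
      finally have rn: "r \<in> {real n..}" by simp
      have "of_real r * w = 4 * pi * cnj (\<theta> ^ N)"
        unfolding r_def w_def cN by simp
      hence "c < F w r" unfolding F_def using assms(8) N1 by simp
      hence "w \<in> U_set \<mu> c n" unfolding Ueq using wS rn by auto
      moreover have "dist w z < e"
      proof -
        have "dist w z = cmod (exp (\<i> * of_real (-a)) - exp (\<i> * of_real \<phi>))"
          unfolding w_def zc dist_norm cis_conv_exp by simp
        also have "\<dots> \<le> \<bar>(-a) - \<phi>\<bar>" by (rule exp_dist)
        finally show ?thesis using ad by simp
      qed
      ultimately show "\<exists>y\<in>U_set \<mu> c n. dist y z < e" by blast
    qed
  qed
qed
end
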